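(* Let $G$ be a $4$-vertex-critical graph, and suppose $C$ is an induced cycle of $G$ such that every vertex of $C$ has degree exactly three in $G$. Then $C$ has odd length, and there is a $3$-coloring of $G-V(C)$ under which every vertex of the set $\left(\bigcup_{c \in V(C)} N_G(c)\right) \setminus V(C)$ receives the same color.
   Context: A $k$-coloring of a graph $G$ is a map $c:V(G)\to\{1,\dots,k\}$ with $c(x)\neq c(y)$ for every edge $xy$. A graph is $k$-chromatic if it is $k$-colorable but not $(k-1)$-colorable. A graph $G$ is $k$-vertex-critical if it is $k$-chromatic and every proper induced subgraph of $G$ is $(k-1)$-colorable. $G-V(C)$ is the subgraph induced by $V(G)\setminus V(C)$; $N_G(c)$ is the neighborhood of $c$ in $G$. *)

theory Defs
  imports Main
begin

definition simple_graph :: "'a set \<Rightarrow> ('a \<Rightarrow> 'a \<Rightarrow> bool) \<Rightarrow> bool" where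
  "simple_graph V E \<longleftrightarrow> finite V \<and> (\<forall>x y. E x y \<longrightarrow> x \<in> V \<and> y \<in> V)
     \<and> (\<forall>x y. E x y \<longrightarrow> E y x) \<and> (\<forall>x. \<not> E x x)"

definition is_coloring :: "'a set \<Rightarrow> ('a \<Rightarrow> 'a \<Rightarrow> bool) \<Rightarrow> nat \<Rightarrow> ('a \<Rightarrow> nat) \<Rightarrow> bool" where
  "is_coloring S E k c \<longleftrightarrow> (\<forall>x\<in>S. c x \<in> {1..k}) \<and> (\<forall>x\<in>S. \<forall>y\<in>S. E x y \<longrightarrow> c x \<noteq> c y)"

definition colorable :: "'a set \<Rightarrow> ('a \<Rightarrow> 'a \<Rightarrow> bool) \<Rightarrow> nat \<Rightarrow> bool" where
  "colorable S E k \<longleftrightarrow> (\<exists>c. is_coloring S E k c)"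

definition chromatic :: "'a set \<Rightarrow> ('a \<Rightarrow> 'a \<Rightarrow> bool) \<Rightarrow> nat \<Rightarrow> bool" where
  "chromatic V E k \<longleftrightarrow> colorable V E k \<and> \<not> colorable V E (k - 1)"

definition vertex_critical :: "'a set \<Rightarrow> ('a \<Rightarrow> 'a \<Rightarrow> bool) \<Rightarrow> nat \<Rightarrow> bool" where
  "vertex_critical V E k \<longleftrightarrow> chromatic V E k \<and> (\<forall>S. S \<subset> V \<longrightarrow> colorable S E (k - 1))"

definition nbhd :: "'a set \<Rightarrow> ('a \<Rightarrow> 'a \<Rightarrow> bool) \<Rightarrow> 'a \<Rightarrow> 'a set" where
  "nbhd V E v = {u \<in> V. E v u}"

definition degree :: "'a set \<Rightarrow> ('a \<Rightarrow> 'a \<Rightarrow> bool) \<Rightarrow> 'a \<Rightarrow> nat" where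
  "degree V E v = card (nbhd V E v)"

definition induced_cycle :: "'a set \<Rightarrow> ('a \<Rightarrow> 'a \<Rightarrow> bool) \<Rightarrow> 'a list \<Rightarrow> bool" where
  "induced_cycle V E cs \<longleftrightarrow> length cs \<ge> 3 \<and> distinct cs \<and> set cs \<subseteq> V \<and>
     (\<forall>i<length cs. \<forall>j<length cs.
        E (cs ! i) (cs ! j) \<longleftrightarrow> (j = (i + 1) mod length cs \<or> i = (j + 1) mod length cs))"

end

theory Submission
  imports Defs
begin

definition pick :: "nat \<Rightarrow> nat \<Rightarrow> nat" where
  "pick a b = (if a \<noteq> 1 \<and> b \<noteq> 1 then 1 else if a \<noteq> 2 \<and> b \<noteq> 2 then 2 else 3)"

lemma pick: "pick a b \<in> {1..3}" "pick a b \<noteq> a" "pick a b \<noteq> b"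
  unfolding pick_def by auto

lemma pick_b: "Suc 0 \<le> pick a b" "pick a b \<le> 3"
  unfolding pick_def by auto

primrec gcol :: "(nat \<Rightarrow> nat) \<Rightarrow> nat \<Rightarrow> nat \<Rightarrow> nat" where
  "gcol f n 0 = f (n - 1)"
| "gcol f n (Suc j) = pick (f (Suc j)) (gcol f n j)"

lemma cyc0:
  fixes f :: "nat \<Rightarrow> nat"
  assumes "n \<ge> 2" "f (n - 1) \<noteq> f 0" "\<forall>i<n. f i \<in> {1..3}"
  shows "\<exists>col. \<forall>i<n. col i \<in> {1..3} \<and> col i \<noteq> f i \<and> col i \<noteq> col (Suc i mod n)"
proof (intro exI allI impI conjI)
  fix i assume i: "i < n"
  show "gcol f n i \<in> {1..3}" using assms i by (cases i) (auto simp: pick pick_b)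
  show "gcol f n i \<noteq> f i" using assms i by (cases i) (auto simp: pick pick_b)
  show "gcol f n i \<noteq> gcol f n (Suc i mod n)"
  proof (cases "Suc i < n")
    case True then show ?thesis using pick(3) by (metis gcol.simps(2) mod_less)
  next
    case False
    then have "Suc i = n" using i by simp
    then have "Suc i mod n = 0" by simp
    moreover obtain m where "i = Suc m" using \<open>Suc i = n\<close> assms(1) by (cases i) auto
    moreover have "n - Suc 0 = Suc m" using \<open>Suc i = n\<close> \<open>i = Suc m\<close> by simp
    ultimately show ?thesis using \<open>Suc i = n\<close> \<open>i = Suc m\<close> pick(2) by simp
  qed
qed

lemma cyc1:
  fixes f :: "nat \<Rightarrow> nat"
  assumes "n \<ge> 2" "k < n" "f k \<noteq> f (Suc k mod n)" "\<forall>i<n. f i \<in> {1..3}"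
  shows "\<exists>col. \<forall>i<n. col i \<in> {1..3} \<and> col i \<noteq> f i \<and> col i \<noteq> col (Suc i mod n)"
proof -
  define f' where "f' i = f ((i + Suc k) mod n)" for i
  have "f' (n - 1) = f k" using assms by (simp add: f'_def)
  moreover have "f' 0 = f (Suc k mod n)" by (simp add: f'_def)
  moreover have "\<forall>i<n. f' i \<in> {1..3}" using assms by (simp add: f'_def)
  ultimately obtain col' where c: "\<forall>i<n. col' i \<in> {1..3} \<and> col' i \<noteq> f' i \<and> col' i \<noteq> col' (Suc i mod n)"
    using cyc0[of n f'] assms by auto
  define col where "col i = col' ((i + n - Suc k) mod n)" for i
  show ?thesis
  proof (intro exI allI impI conjI)
    fix i assume i: "i < n"
    have j: "(i + n - Suc k) mod n < n" using assms by simp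
    show "col i \<in> {1..3}" using c j by (simp add: col_def)
    have "f' ((i + n - Suc k) mod n) = f i"
    proof -
      have "((i + n - Suc k) mod n + Suc k) mod n = (i + n - Suc k + Suc k) mod n" by (rule mod_add_left_eq)
      also have "\<dots> = i" using assms i by simp
      finally show ?thesis by (simp add: f'_def)
    qed
    moreover have "col' ((i + n - Suc k) mod n) \<noteq> f' ((i + n - Suc k) mod n)" using c j by blast
    ultimately show "col i \<noteq> f i" by (simp add: col_def)
    have "(Suc i mod n + n - Suc k) mod n = Suc ((i + n - Suc k) mod n) mod n"
    proof -
      have "(Suc i mod n + n - Suc k) mod n = (Suc i mod n + (n - Suc k)) mod n" using assms by simp
      also have "\<dots> = (Suc i + (n - Suc k)) mod n" by (simp add: mod_simps)
      also have "\<dots> = Suc (i + (n - Suc k)) mod n" by simp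
      also have "\<dots> = Suc ((i + (n - Suc k)) mod n) mod n" by (simp add: mod_simps)
      also have "\<dots> = Suc ((i + n - Suc k) mod n) mod n" using assms by simp
      finally show ?thesis .
    qed
    moreover have "col' ((i + n - Suc k) mod n) \<noteq> col' (Suc ((i + n - Suc k) mod n) mod n)" using c j by blast
    ultimately show "col i \<noteq> col (Suc i mod n)" unfolding col_def by metis
  qed
qed

lemma cyc2:
  fixes f :: "nat \<Rightarrow> nat"
  assumes "n \<ge> 2" "even n" "\<forall>i<n. f i = a" "a \<in> {1..3}"
  shows "\<exists>col. \<forall>i<n. col i \<in> {1..3} \<and> col i \<noteq> f i \<and> col i \<noteq> col (Suc i mod n)"
proof -
  define col where "col = (\<lambda>i::nat. if even i then pick a a else pick a (pick a a))"
  show ?thesis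
  proof (intro exI[of _ col] allI impI conjI)
  fix i assume i: "i < n"
  let ?col = col
  show "?col i \<in> {1..3}" by (simp add: pick_b col_def)
  show "?col i \<noteq> f i" using assms i by (simp add: pick col_def)
  show "?col i \<noteq> ?col (Suc i mod n)"
  proof (cases "Suc i < n")
    case True then show ?thesis using pick(3)[of a "pick a a"] by (auto simp: col_def)
  next
    case False
    then have "Suc i = n" using i by simp
    then have "odd i" using assms(2) by auto
    then show ?thesis using \<open>Suc i = n\<close> pick(3)[of a "pick a a"] by (auto simp: col_def)
  qed
  qed
qed

lemma cyc:
  fixes f :: "nat \<Rightarrow> nat"
  assumes "n \<ge> 2" "\<forall>i<n. f i \<in> {1..3}"
    and "\<not> (\<exists>col. \<forall>i<n. col i \<in> {1..3} \<and> col i \<noteq> f i \<and> col i \<noteq> col (Suc i mod n))"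
  shows "odd n \<and> (\<forall>i<n. f i = f 0)"
proof -
  have all: "f k = f (Suc k mod n)" if "k < n" for k
  proof (rule ccontr)
    assume "f k \<noteq> f (Suc k mod n)"
    from cyc1[OF assms(1) that this assms(2)] assms(3) show False by (rule notE[rotated])
  qed
  have eq: "f i = f 0" if "i < n" for i
    using that
  proof (induction i)
    case (Suc i)
    then have "Suc i mod n = Suc i" by simp
    then show ?case using all[of i] Suc by simp
  qed simp
  have "odd n"
  proof (rule ccontr)
    assume "\<not> odd n"
    then have "even n" by simp
    have "f 0 \<in> {1..3}" using assms by auto
    from cyc2[OF assms(1) \<open>even n\<close> _ this] eq assms(3) show False by blast
  qed
  then show ?thesis using eq by blast
qed


lemma predmod: "(i::nat) < n \<Longrightarrow> i \<noteq> 0 \<Longrightarrow> (i + n - 1) mod n = i - 1"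
proof -
  assume a: "i < n" "i \<noteq> 0"
  have "i + n - 1 = (i - 1) + n" using a by arith
  then have "(i + n - 1) mod n = ((i - 1) + n) mod n" by (rule arg_cong)
  also have "\<dots> = (i - 1) mod n" by (rule mod_add_self2)
  also have "\<dots> = i - 1" using a by (intro mod_less) arith
  finally show ?thesis .
qed

lemma pred0: "(0::nat) < n \<Longrightarrow> (0 + n - 1) mod n = n - 1"
  by simp

lemma pred_idx:
  assumes "i < n" "j < n"
  shows "(i = Suc j mod n) \<longleftrightarrow> (j = (i + n - 1) mod n)"
proof (cases "Suc j < n")
  case True
  then have sj: "Suc j mod n = Suc j" by simp
  show ?thesis
  proof (cases "i = 0")
    case True
    then have e: "(i + n - 1) mod n = n - 1" using assms pred0 by simp
    show ?thesis unfolding e sj using \<open>Suc j < n\<close> True by arith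
  next
    case False
    then have e: "(i + n - 1) mod n = i - 1" using assms predmod by blast
    show ?thesis unfolding e sj using False by arith
  qed
next
  case False
  then have sj: "Suc j = n" using assms by simp
  then have sj0: "Suc j mod n = 0" by simp
  show ?thesis
  proof (cases "i = 0")
    case True
    then have e: "(i + n - 1) mod n = n - 1" using assms pred0 by simp
    show ?thesis unfolding e sj0 using sj True by arith
  next
    case False
    then have e: "(i + n - 1) mod n = i - 1" using assms predmod by blast
    show ?thesis unfolding e sj0 using sj False assms by arith
  qed
qed

lemma succ_pred_ne:
  assumes "n \<ge> 3" "i < n"
  shows "Suc i mod n \<noteq> (i + n - 1) mod n"
proof (cases "i = 0")
  case True
  then have e: "(i + n - 1) mod n = n - 1" using assms pred0 by simp
  have "Suc i mod n = 1" using True assms by simp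
  then show ?thesis unfolding e using assms by arith
next
  case False
  have p: "(i + n - 1) mod n = i - 1" using False assms predmod by blast
  show ?thesis
  proof (cases "Suc i < n")
    case True then have "Suc i mod n = Suc i" by simp
    then show ?thesis unfolding p using False by arith
  next
    case False then have "Suc i = n" using assms by simp
    then have "Suc i mod n = 0" by simp
    then show ?thesis unfolding p using \<open>Suc i = n\<close> assms by arith
  qed
qed

theorem lemma5:
  fixes V :: "'a set" and E :: "'a \<Rightarrow> 'a \<Rightarrow> bool" and cs :: "'a list"
  assumes "simple_graph V E"
    and "vertex_critical V E 4"
    and "induced_cycle V E cs"
    and "\<forall>v\<in>set cs. degree V E v = 3"
  shows "odd (length cs) \<and>
    (\<exists>c. is_coloring (V - set cs) E 3 c \<and>
        (\<exists>a. \<forall>u \<in> (\<Union>v\<in>set cs. nbhd V E v) - set cs. c u = a))"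
proof -
  define n where "n = length cs"
  from assms(1) have fin: "finite V" and sym: "\<And>x y. E x y \<Longrightarrow> E y x"
    and EV: "\<And>x y. E x y \<Longrightarrow> x \<in> V \<and> y \<in> V"
    unfolding simple_graph_def by auto
  have ic: "length cs \<ge> 3 \<and> distinct cs \<and> set cs \<subseteq> V \<and>
     (\<forall>i<length cs. \<forall>j<length cs.
        E (cs ! i) (cs ! j) \<longleftrightarrow> (j = (i + 1) mod length cs \<or> i = (j + 1) mod length cs))"
    using assms(3) unfolding induced_cycle_def .
  have n3: "n \<ge> 3" using conjunct1[OF ic] n_def by simp
  have dist: "distinct cs" using conjunct1[OF conjunct2[OF ic]] .
  have CV: "set cs \<subseteq> V" using conjunct1[OF conjunct2[OF conjunct2[OF ic]]] .
  have adj: "E (cs!i) (cs!j) \<longleftrightarrow> (j = Suc i mod n \<or> i = Suc j mod n)" if "i < n" "j < n" for i j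
  proof -
    have "\<forall>i<length cs. \<forall>j<length cs.
        E (cs ! i) (cs ! j) \<longleftrightarrow> (j = (i + 1) mod length cs \<or> i = (j + 1) mod length cs)"
      using conjunct2[OF conjunct2[OF conjunct2[OF ic]]] .
    then have "E (cs ! i) (cs ! j) \<longleftrightarrow> (j = (i + 1) mod length cs \<or> i = (j + 1) mod length cs)"
      using that n_def by blast
    then show ?thesis unfolding n_def by simp
  qed
  from assms(2) have nc: "\<not> colorable V E 3" and sub: "\<And>S. S \<subset> V \<Longrightarrow> colorable S E 3"
    unfolding vertex_critical_def chromatic_def by auto
  have "length cs \<noteq> 0" using n3 unfolding n_def by linarith
  then obtain x0 where x0: "x0 \<in> set cs" by (cases cs) auto
  then have "x0 \<in> V" using CV by blast
  then have "V - set cs \<subset> V" using x0 by blast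
  then have "colorable (V - set cs) E 3" by (rule sub)
  then obtain c where c: "is_coloring (V - set cs) E 3 c" unfolding colorable_def by (rule exE)
  have outn: "\<exists>ob. ob \<in> V - set cs \<and> E (cs!i) ob \<and> (\<forall>u\<in>V - set cs. E (cs!i) u \<longrightarrow> u = ob)"
    if i: "i < n" for i
  proof -
    define N where "N = nbhd V E (cs!i)"
    define a where "a = cs ! (Suc i mod n)"
    define b where "b = cs ! ((i + n - 1) mod n)"
    have n0: "n > 0" using n3 by linarith
    have ia: "Suc i mod n < n" using n0 by (rule mod_less_divisor)
    have ib: "(i + n - 1) mod n < n" using n0 by (rule mod_less_divisor)
    have i': "i < length cs" using i unfolding n_def .
    have ia': "Suc i mod n < length cs" using ia unfolding n_def .
    have ib': "(i + n - 1) mod n < length cs" using ib unfolding n_def .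
    have NC: "N \<inter> set cs = {a, b}"
    proof
      show "N \<inter> set cs \<subseteq> {a, b}"
      proof
        fix x assume x: "x \<in> N \<inter> set cs"
        then have "x \<in> set cs" by blast
        then obtain j where j': "j < length cs" "x = cs ! j" by (metis in_set_conv_nth)
        have j: "j < n" using j'(1) unfolding n_def .
        have "E (cs!i) x" using x unfolding N_def nbhd_def by blast
        then have "E (cs!i) (cs!j)" using j'(2) by blast
        then have "j = Suc i mod n \<or> i = Suc j mod n" using adj[OF i j] by blast
        then have "j = Suc i mod n \<or> j = (i + n - 1) mod n" using pred_idx[OF i j] by blast
        then show "x \<in> {a, b}" using j'(2) unfolding a_def b_def by blast
      qed
    next
      have "E (cs!i) a" unfolding a_def using adj[OF i ia] by blast
      moreover have "i = Suc ((i + n - 1) mod n) mod n" using pred_idx[OF i ib] by blast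
      then have "E (cs!i) b" unfolding b_def using adj[OF i ib] by blast
      moreover have "a \<in> set cs" unfolding a_def by (rule nth_mem[OF ia'])
      moreover have "b \<in> set cs" unfolding b_def by (rule nth_mem[OF ib'])
      ultimately show "{a, b} \<subseteq> N \<inter> set cs" using CV unfolding N_def nbhd_def by blast
    qed
    have ab: "a \<noteq> b"
      using nth_eq_iff_index_eq[OF dist ia' ib'] succ_pred_ne[OF n3 i] unfolding a_def b_def by blast
    have "N \<subseteq> V" unfolding N_def nbhd_def by blast
    then have finN: "finite N" using fin by (rule finite_subset)
    have "degree V E (cs!i) = 3" using assms(4) nth_mem[OF i'] by blast
    then have cN: "card N = 3" unfolding N_def degree_def .
    have "card (N \<inter> set cs) = 2" unfolding NC using ab by simp
    moreover have "card N = card (N \<inter> set cs) + card (N - set cs)"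
      by (rule card_Int_Diff[OF finN])
    ultimately have "card (N - set cs) = 1" using cN by linarith
    then obtain ob where ob: "N - set cs = {ob}" by (rule card_1_singletonE)
    then have "ob \<in> N - set cs" by blast
    then have "ob \<in> V - set cs" "E (cs!i) ob" unfolding N_def nbhd_def by blast+
    moreover have "\<forall>u\<in>V - set cs. E (cs!i) u \<longrightarrow> u = ob"
    proof (intro ballI impI)
      fix u assume "u \<in> V - set cs" "E (cs!i) u"
      then have "u \<in> N - set cs" unfolding N_def nbhd_def by blast
      then show "u = ob" using ob by blast
    qed
    ultimately show ?thesis by blast
  qed
  have "\<forall>i. \<exists>ob. i < n \<longrightarrow> ob \<in> V - set cs \<and> E (cs!i) ob \<and> (\<forall>u\<in>V - set cs. E (cs!i) u \<longrightarrow> u = ob)"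
  proof
    fix i show "\<exists>ob. i < n \<longrightarrow> ob \<in> V - set cs \<and> E (cs!i) ob \<and> (\<forall>u\<in>V - set cs. E (cs!i) u \<longrightarrow> u = ob)"
    proof (cases "i < n")
      case True
      then obtain ob where "ob \<in> V - set cs \<and> E (cs!i) ob \<and> (\<forall>u\<in>V - set cs. E (cs!i) u \<longrightarrow> u = ob)"
        using outn by blast
      then show ?thesis by blast
    next
      case False then show ?thesis by blast
    qed
  qed
  then have "\<exists>ob. \<forall>i. i < n \<longrightarrow> ob i \<in> V - set cs \<and> E (cs!i) (ob i) \<and> (\<forall>u\<in>V - set cs. E (cs!i) u \<longrightarrow> u = ob i)"
    by (rule choice)
  then obtain ob where o0: "\<forall>i. i < n \<longrightarrow> ob i \<in> V - set cs \<and> E (cs!i) (ob i) \<and> (\<forall>u\<in>V - set cs. E (cs!i) u \<longrightarrow> u = ob i)"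
    by (rule exE)
  have ob: "ob i \<in> V - set cs \<and> E (cs!i) (ob i) \<and> (\<forall>u\<in>V - set cs. E (cs!i) u \<longrightarrow> u = ob i)" if "i < n" for i
    using o0 that by blast
  define f where "f i = c (ob i)" for i
  have frange: "\<forall>i<n. f i \<in> {1..3}"
  proof (intro allI impI)
    fix i assume "i < n"
    then have "ob i \<in> V - set cs" using ob by blast
    then show "f i \<in> {1..3}" using c unfolding is_coloring_def f_def by blast
  qed
  have nocol: "\<not> (\<exists>col. \<forall>i<n. col i \<in> {1..3} \<and> col i \<noteq> f i \<and> col i \<noteq> col (Suc i mod n))"
  proof
    assume "\<exists>col. \<forall>i<n. col i \<in> {1..3} \<and> col i \<noteq> f i \<and> col i \<noteq> col (Suc i mod n)"
    then obtain col where col0: "\<forall>i<n. col i \<in> {1..3} \<and> col i \<noteq> f i \<and> col i \<noteq> col (Suc i mod n)"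
      by (rule exE)
    have col: "col i \<in> {1..3}" "col i \<noteq> f i" "col i \<noteq> col (Suc i mod n)" if "i < n" for i
      using col0 that by blast+
    have ex_idx: "\<exists>i. i < n \<and> cs ! i = v" if "v \<in> set cs" for v
    proof -
      have "\<exists>i < length cs. cs ! i = v" using that by (simp only: in_set_conv_nth)
      then obtain i where "i < length cs" "cs ! i = v" by blast
      then show ?thesis unfolding n_def by blast
    qed
    define idx where "idx v = (THE i. i < n \<and> cs ! i = v)" for v
    have idx: "idx (cs ! i) = i" if "i < n" for i
      unfolding idx_def
    proof (rule the_equality)
      show "i < n \<and> cs ! i = cs ! i" using that by blast
    next
      fix j assume j: "j < n \<and> cs ! j = cs ! i"
      have "j < length cs" "i < length cs" using j that unfolding n_def by blast+
      then show "j = i" using nth_eq_iff_index_eq[OF dist] j by blast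
    qed
    define c' where "c' v = (if v \<in> set cs then col (idx v) else c v)" for v
    have c'in: "c' (cs ! i) = col i" if "i < n" for i
    proof -
      have "cs ! i \<in> set cs" using nth_mem that unfolding n_def by blast
      then show ?thesis unfolding c'_def using idx[OF that] by simp
    qed
    have c'out: "c' v = c v" if "v \<notin> set cs" for v using that unfolding c'_def by simp
    have mixed: "c' x \<noteq> c' y" if mx: "x \<in> set cs" "y \<in> V - set cs" "E x y" for x y
    proof -
      obtain i where i: "i < n" "cs ! i = x" using ex_idx[OF mx(1)] by blast
      have "y = ob i" using ob[OF i(1)] mx i by blast
      then have "c' y = f i" using c'out[of y] mx(2) unfolding f_def by simp
      moreover have "c' x = col i" using c'in[OF i(1)] i(2) by simp
      ultimately show ?thesis using col(2)[OF i(1)] by simp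
    qed
    have "is_coloring V E 3 c'"
      unfolding is_coloring_def
    proof (intro conjI ballI impI)
      fix x assume x: "x \<in> V"
      show "c' x \<in> {1..3}"
      proof (cases "x \<in> set cs")
        case True
        then obtain i where i: "i < n" "cs ! i = x" using ex_idx by blast
        then show ?thesis using c'in[OF i(1)] col(1)[OF i(1)] by simp
      next
        case False
        then have "x \<in> V - set cs" using x by blast
        then have "c x \<in> {1..3}" using c unfolding is_coloring_def by blast
        then show ?thesis using c'out[OF False] by simp
      qed
    next
      fix x y assume x: "x \<in> V" and y: "y \<in> V" and e: "E x y"
      show "c' x \<noteq> c' y"
      proof (cases "x \<in> set cs")
        case True note xC = True
        show ?thesis
        proof (cases "y \<in> set cs")
          case True
          obtain i where i: "i < n" "cs ! i = x" using ex_idx[OF xC] by blast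
          obtain j where j: "j < n" "cs ! j = y" using ex_idx[OF True] by blast
          have "E (cs!i) (cs!j)" using e i j by simp
          then have "j = Suc i mod n \<or> i = Suc j mod n" using adj[OF i(1) j(1)] by blast
          moreover have cx: "c' x = col i" using c'in[OF i(1)] i(2) by simp
          moreover have cy: "c' y = col j" using c'in[OF j(1)] j(2) by simp
          ultimately show ?thesis
          proof (elim disjE)
            assume "j = Suc i mod n" then show ?thesis using col(3)[OF i(1)] cx cy by simp
          next
            assume "i = Suc j mod n" then show ?thesis using col(3)[OF j(1)] cx cy by simp
          qed
        next
          case False
          then have "y \<in> V - set cs" using y by blast
          then show ?thesis using mixed[OF xC _ e] by blast
        qed
      next
        case False note xC = False
        show ?thesis
        proof (cases "y \<in> set cs")
          case True
          have "x \<in> V - set cs" using x xC by blast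
          then have "c' y \<noteq> c' x" using mixed[OF True _ sym[OF e]] by blast
          then show ?thesis by (rule not_sym)
        next
          case False
          have "x \<in> V - set cs" "y \<in> V - set cs" using x y xC False by blast+
          then have "c x \<noteq> c y" using c e unfolding is_coloring_def by blast
          then show ?thesis using c'out[OF xC] c'out[OF False] by simp
        qed
      qed
    qed
    then have "colorable V E 3" unfolding colorable_def by blast
    then show False using nc by blast
  qed
  have "n \<ge> 2" using n3 by simp
  from cyc[OF this frange nocol] have res: "odd n" "\<And>i. i < n \<Longrightarrow> f i = f 0" by blast+
  have "\<forall>u \<in> (\<Union>v\<in>set cs. nbhd V E v) - set cs. c u = f 0"
  proof
    fix u assume u: "u \<in> (\<Union>v\<in>set cs. nbhd V E v) - set cs"
    then obtain v where v: "v \<in> set cs" "u \<in> nbhd V E v" by blast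
    obtain i where i: "i < n" "v = cs ! i" using v(1) in_set_conv_nth n_def by metis
    have "u \<in> V" "E (cs!i) u" using v(2) i(2) unfolding nbhd_def by auto
    then have "u \<in> V - set cs" "E (cs!i) u" using u by auto
    then have "u = ob i" using ob[OF i(1)] by blast
    then show "c u = f 0" using res(2)[OF i(1)] f_def by simp
  qed
  then show ?thesis using res(1) c unfolding n_def by blast
qed

end
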